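(* Let $R$ be a commutative elementary divisor domain and $A,B\in M_2(R)$. Let $P_A,P_B,Q_A,Q_B\in GL_2(R)$ with $P_AAQ_A=E=\mathrm{diag}(\varepsilon_1,\varepsilon_2)$ and $P_BBQ_B=\Delta=\mathrm{diag}(\delta_1,\delta_2)$ $d$-matrices, and write $P_BP_A^{-1}=(s_{ij})_{i,j=1}^2$. Then the element $\big((\varepsilon_2,\delta_2),\,s_{21}[\varepsilon_1,\delta_1]\big)$ does not depend (up to a unit factor) on the choice of $P_A,P_B$, and a left greatest common divisor $(A,B)_l$ of $A$ and $B$ is equivalent to the $d$-matrix $$\mathrm{diag}\Big((\varepsilon_1,\delta_1),\ \big(\varepsilon_2,\delta_2,[\varepsilon_1,\delta_1]s_{21}\big)\Big).$$
   Context: An elementary divisor domain: a commutative integral domain over which every matrix is equivalent ($PAQ$, $P,Q$ invertible) to a $d$-matrix, i.e. a diagonal matrix $\mathrm{diag}(\varphi_1,\dots)$ with $\varphi_i\mid\varphi_{i+1}$; it is in particular a Bezout domain. $(a,b,\dots)$ denotes a greatest common divisor and $[a,b]$ a least common multiple (with $(a,0)=a$, $[a,0]=0$), both defined up to unit factors. $D$ is a left greatest common divisor of $A,B$ if $A=DA_1$, $B=DB_1$ for some matrices $A_1,B_1$ and every $D'$ with this property is a left divisor of $D$ ($D=D'C$ for some $C$). *)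

theory Defs
  imports "Jordan_Normal_Form.Matrix"
begin

definition is_d_matrix :: "'a::idom mat \<Rightarrow> bool" where
  "is_d_matrix D \<longleftrightarrow>
     (\<forall>i j. i < dim_row D \<longrightarrow> j < dim_col D \<longrightarrow> i \<noteq> j \<longrightarrow> D $$ (i,j) = 0) \<and>
     (\<forall>i. Suc i < min (dim_row D) (dim_col D) \<longrightarrow> D $$ (i,i) dvd D $$ (Suc i, Suc i))"

definition mat_equiv :: "'a::idom mat \<Rightarrow> 'a mat \<Rightarrow> bool" where
  "mat_equiv A B \<longleftrightarrow>
     (\<exists>P Q. P \<in> carrier_mat (dim_row A) (dim_row A) \<and> Q \<in> carrier_mat (dim_col A) (dim_col A)
        \<and> invertible_mat P \<and> invertible_mat Q \<and> P * A * Q = B)"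

definition elementary_divisor_domain :: "'a::idom itself \<Rightarrow> bool" where
  "elementary_divisor_domain _ \<longleftrightarrow>
     (\<forall>m n (A::'a mat). A \<in> carrier_mat m n \<longrightarrow> (\<exists>D. is_d_matrix D \<and> mat_equiv A D))"

definition is_gcd :: "'a::idom set \<Rightarrow> 'a \<Rightarrow> bool" where
  "is_gcd S g \<longleftrightarrow> (\<forall>s\<in>S. g dvd s) \<and> (\<forall>d. (\<forall>s\<in>S. d dvd s) \<longrightarrow> d dvd g)"

definition is_lcm :: "'a::idom \<Rightarrow> 'a \<Rightarrow> 'a \<Rightarrow> bool" where
  "is_lcm a b l \<longleftrightarrow> a dvd l \<and> b dvd l \<and> (\<forall>m. a dvd m \<longrightarrow> b dvd m \<longrightarrow> l dvd m)"

definition is_left_gcd :: "nat \<Rightarrow> 'a::idom mat \<Rightarrow> 'a mat \<Rightarrow> 'a mat \<Rightarrow> bool" where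
  "is_left_gcd n A B D \<longleftrightarrow> D \<in> carrier_mat n n \<and>
     (\<exists>A1 B1. A1 \<in> carrier_mat n n \<and> B1 \<in> carrier_mat n n \<and> A = D * A1 \<and> B = D * B1) \<and>
     (\<forall>D'. D' \<in> carrier_mat n n \<longrightarrow>
        (\<exists>A1 B1. A1 \<in> carrier_mat n n \<and> B1 \<in> carrier_mat n n \<and> A = D' * A1 \<and> B = D' * B1) \<longrightarrow>
        (\<exists>C. C \<in> carrier_mat n n \<and> D = D' * C))"

definition diag2 :: "'a::zero \<Rightarrow> 'a \<Rightarrow> 'a mat" where
  "diag2 a b = mat_diag 2 (\<lambda>i. if i = 0 then a else b)"

end

theory Submission
  imports Defs
begin


definition det2 :: "'a::comm_ring_1 \<times> 'a \<Rightarrow> 'a \<times> 'a \<Rightarrow> 'a" where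
  "det2 u v = fst u * snd v - snd u * fst v"

inductive_set lc :: "('a::comm_ring_1 \<times> 'a) set \<Rightarrow> ('a \<times> 'a) set" for W where
  zero: "(0,0) \<in> lc W"
| base: "w \<in> W \<Longrightarrow> w \<in> lc W"
| add: "u \<in> lc W \<Longrightarrow> v \<in> lc W \<Longrightarrow> (fst u + fst v, snd u + snd v) \<in> lc W"
| smul: "u \<in> lc W \<Longrightarrow> (r * fst u, r * snd u) \<in> lc W"

definition Div1 :: "('a::comm_ring_1 \<times> 'a) set \<Rightarrow> 'a set" where
  "Div1 W = {c. \<forall>u\<in>W. c dvd fst u \<and> c dvd snd u}"
definition Div2 :: "('a::comm_ring_1 \<times> 'a) set \<Rightarrow> 'a set" where
  "Div2 W = {c. \<forall>u\<in>W. \<forall>v\<in>W. c dvd det2 u v}"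

lemma Div1_lc: "u \<in> lc W \<Longrightarrow> c \<in> Div1 W \<Longrightarrow> c dvd fst u \<and> c dvd snd u"
  by (induction rule: lc.induct) (auto simp: Div1_def)

lemma Div2_lc1: "v \<in> lc W \<Longrightarrow> c \<in> Div2 W \<Longrightarrow> u \<in> W \<Longrightarrow> c dvd det2 u v"
proof (induction rule: lc.induct)
  case zero then show ?case by (simp add: det2_def)
next
  case (base w) then show ?case by (auto simp: Div2_def)
next
  case (add x y)
  have "det2 u (fst x + fst y, snd x + snd y) = det2 u x + det2 u y" by (simp add: det2_def algebra_simps)
  then show ?case using add by simp
next
  case (smul x r)
  have "det2 u (r * fst x, r * snd x) = r * det2 u x" by (simp add: det2_def algebra_simps)
  then show ?case using smul by simp
qed

lemma Div2_lc: "u \<in> lc W \<Longrightarrow> c \<in> Div2 W \<Longrightarrow> v \<in> lc W \<Longrightarrow> c dvd det2 u v"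
proof (induction rule: lc.induct)
  case zero then show ?case by (simp add: det2_def)
next
  case (base w) then show ?case using Div2_lc1[of v W c w] by (simp add: det2_def algebra_simps dvd_minus_iff)
next
  case (add x y)
  have "det2 (fst x + fst y, snd x + snd y) v = det2 x v + det2 y v" by (simp add: det2_def algebra_simps)
  then show ?case using add by simp
next
  case (smul x r)
  have "det2 (r * fst x, r * snd x) v = r * det2 x v" by (simp add: det2_def algebra_simps)
  then show ?case using smul by simp
qed

lemma lc_trans: "u \<in> lc W \<Longrightarrow> W \<subseteq> lc W' \<Longrightarrow> u \<in> lc W'"
  by (induction rule: lc.induct) (auto intro: lc.intros)

lemma lc_mono: "u \<in> lc W \<Longrightarrow> W \<subseteq> W' \<Longrightarrow> u \<in> lc W'"
  by (induction rule: lc.induct) (auto intro: lc.intros)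

lemma Div1_sub: "W \<subseteq> lc W' \<Longrightarrow> Div1 W' \<subseteq> Div1 W"
  using Div1_lc unfolding Div1_def by blast
lemma Div2_sub: "W \<subseteq> lc W' \<Longrightarrow> Div2 W' \<subseteq> Div2 W"
  using Div2_lc unfolding Div2_def by (smt (verit) mem_Collect_eq subset_eq)

lemma sum_lc: "finite K \<Longrightarrow> (\<forall>i\<in>K. (a i, b i) \<in> lc W) \<Longrightarrow>
   ((\<Sum>i\<in>K. a i * f i), (\<Sum>i\<in>K. b i * f i)) \<in> lc W"
proof (induction K rule: finite_induct)
  case empty then show ?case by (simp add: lc.zero)
next
  case (insert x F)
  have "(f x * a x, f x * b x) \<in> lc W" using lc.smul[of "(a x, b x)" W "f x"] insert by simp
  then have "(a x * f x, b x * f x) \<in> lc W" by (simp add: mult.commute)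
  from lc.add[OF this insert.IH] insert show ?case by simp
qed

definition colv :: "'a mat \<Rightarrow> nat \<Rightarrow> 'a \<times> 'a" where
  "colv X j = (X $$ (0,j), X $$ (1,j))"

definition colsN :: "'a mat \<Rightarrow> ('a \<times> 'a) set" where
  "colsN X = colv X ` {..<dim_col X}"

definition pv :: "'a::comm_ring_1 mat \<Rightarrow> 'a \<times> 'a \<Rightarrow> 'a \<times> 'a" where
  "pv P u = (P$$(0,0) * fst u + P$$(0,1) * snd u, P$$(1,0) * fst u + P$$(1,1) * snd u)"

lemma mult2: "X \<in> carrier_mat m 2 \<Longrightarrow> Y \<in> carrier_mat 2 n \<Longrightarrow> i < m \<Longrightarrow> j < n \<Longrightarrow>
   (X * Y) $$ (i,j) = X$$(i,0) * Y$$(0,j) + X$$(i,1) * Y$$(1,j)"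
  by (auto simp: scalar_prod_def numeral_2_eq_2)

lemma multN: "X \<in> carrier_mat m k \<Longrightarrow> Y \<in> carrier_mat k n \<Longrightarrow> i < m \<Longrightarrow> j < n \<Longrightarrow>
   (X * Y) $$ (i,j) = (\<Sum>l<k. X$$(i,l) * Y$$(l,j))"
  by (auto simp: scalar_prod_def atLeast0LessThan)

lemma cols_mult_lc: assumes "X \<in> carrier_mat 2 k" "Y \<in> carrier_mat k n"
  shows "colsN (X*Y) \<subseteq> lc (colsN X)"
proof
  fix u assume "u \<in> colsN (X*Y)"
  then obtain j where j: "j < n" "u = colv (X*Y) j" using assms by (auto simp: colsN_def)
  have "u = ((\<Sum>l\<in>{..<k}. X$$(0,l) * Y$$(l,j)), (\<Sum>l\<in>{..<k}. X$$(1,l) * Y$$(l,j)))"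
    using j assms by (simp add: colv_def scalar_prod_def atLeast0LessThan)
  also have "\<dots> \<in> lc (colsN X)"
    by (rule sum_lc) (use assms in \<open>auto simp: colsN_def colv_def intro!: lc.base\<close>)
  finally show "u \<in> lc (colsN X)" .
qed

lemma colv_mult: "X \<in> carrier_mat 2 2 \<Longrightarrow> Y \<in> carrier_mat 2 n \<Longrightarrow> j < n \<Longrightarrow>
  colv (X*Y) j = pv X (colv Y j)"
  by (auto simp: colv_def pv_def scalar_prod_def numeral_2_eq_2)

lemma cols_mult_pv: "X \<in> carrier_mat 2 2 \<Longrightarrow> Y \<in> carrier_mat 2 n \<Longrightarrow>
  colsN (X*Y) = pv X ` colsN Y"
proof -
  assume a: "X \<in> carrier_mat 2 2" "Y \<in> carrier_mat 2 n"
  have "colsN (X*Y) = (\<lambda>j. pv X (colv Y j)) ` {..<n}"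
    unfolding colsN_def using a colv_mult[OF a] by (auto intro!: image_cong)
  also have "\<dots> = pv X ` colsN Y" using a by (simp add: colsN_def image_image)
  finally show ?thesis .
qed

lemma Div1_pv: "c \<in> Div1 W \<Longrightarrow> c \<in> Div1 (pv P ` W)"
  by (auto simp: Div1_def pv_def)

lemma det2_pv: "det2 (pv P u) (pv P v) = (P$$(0,0) * P$$(1,1) - P$$(0,1) * P$$(1,0)) * det2 u v"
  by (simp add: det2_def pv_def algebra_simps)

lemma Div2_pv: "c \<in> Div2 W \<Longrightarrow> c \<in> Div2 (pv P ` W)"
  by (auto simp: Div2_def det2_pv)

lemma pv_inv: assumes a: "P' \<in> carrier_mat 2 2" "P \<in> carrier_mat 2 2" "P' * P = 1\<^sub>m 2"
  shows "pv P' (pv P u) = u"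
proof -
  have e: "(P'*P)$$(i,j) = (if i = j then 1 else 0)" if "i<2" "j<2" for i j
    using a that by simp
  have e00: "P'$$(0,0) * P$$(0,0) + P'$$(0,1) * P$$(1,0) = 1" using e[of 0 0] mult2[OF a(1,2)] by simp
  have e01: "P'$$(0,0) * P$$(0,1) + P'$$(0,1) * P$$(1,1) = 0" using e[of 0 1] mult2[OF a(1,2), of 0 1] by simp
  have e10: "P'$$(1,0) * P$$(0,0) + P'$$(1,1) * P$$(1,0) = 0" using e[of 1 0] mult2[OF a(1,2), of 1 0] by simp
  have e11: "P'$$(1,0) * P$$(0,1) + P'$$(1,1) * P$$(1,1) = 1" using e[of 1 1] mult2[OF a(1,2), of 1 1] by simp
  obtain x y where u: "u = (x,y)" by fastforce
  have "P'$$(0,0) * (P$$(0,0) * x + P$$(0,1) * y) + P'$$(0,1) * (P$$(1,0) * x + P$$(1,1) * y)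
    = (P'$$(0,0) * P$$(0,0) + P'$$(0,1) * P$$(1,0)) * x + (P'$$(0,0) * P$$(0,1) + P'$$(0,1) * P$$(1,1)) * y"
    by (simp add: algebra_simps)
  moreover have "P'$$(1,0) * (P$$(0,0) * x + P$$(0,1) * y) + P'$$(1,1) * (P$$(1,0) * x + P$$(1,1) * y)
    = (P'$$(1,0) * P$$(0,0) + P'$$(1,1) * P$$(1,0)) * x + (P'$$(1,0) * P$$(0,1) + P'$$(1,1) * P$$(1,1)) * y"
    by (simp add: algebra_simps)
  ultimately show ?thesis using e00 e01 e10 e11 u by (simp add: pv_def)
qed



lemma inv_ex: assumes "invertible_mat P" "P \<in> carrier_mat n n"
  shows "\<exists>P'. P' \<in> carrier_mat n n \<and> P * P' = 1\<^sub>m n \<and> P' * P = 1\<^sub>m n"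
proof -
  obtain B where B: "P * B = 1\<^sub>m (dim_row P)" "B * P = 1\<^sub>m (dim_row B)"
    using assms unfolding invertible_mat_def inverts_mat_def by blast
  have "dim_row P = n" "dim_col P = n" using assms by auto
  moreover have "dim_col B = n" using B(1) \<open>dim_row P = n\<close>
    by (metis index_mult_mat(3) index_one_mat(3))
  moreover have "dim_row B = n" using B(2) \<open>dim_col P = n\<close>
    by (metis index_mult_mat(3) index_one_mat(3))
  ultimately show ?thesis using B by (intro exI[of _ B]) auto
qed

lemma Div1_pv_eq: assumes "P \<in> carrier_mat 2 2" "P' \<in> carrier_mat 2 2" "P' * P = 1\<^sub>m 2"
  shows "Div1 (pv P ` W) = Div1 W"
proof
  show "Div1 W \<subseteq> Div1 (pv P ` W)" using Div1_pv by blast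
  have "pv P' ` pv P ` W = W" using pv_inv[OF assms(2,1,3)] by (simp add: image_image)
  then show "Div1 (pv P ` W) \<subseteq> Div1 W" using Div1_pv[of _ "pv P ` W" P'] by auto
qed

lemma Div2_pv_eq: assumes "P \<in> carrier_mat 2 2" "P' \<in> carrier_mat 2 2" "P' * P = 1\<^sub>m 2"
  shows "Div2 (pv P ` W) = Div2 W"
proof
  show "Div2 W \<subseteq> Div2 (pv P ` W)" using Div2_pv by blast
  have "pv P' ` pv P ` W = W" using pv_inv[OF assms(2,1,3)] by (simp add: image_image)
  then show "Div2 (pv P ` W) \<subseteq> Div2 W" using Div2_pv[of _ "pv P ` W" P'] by auto
qed

lemma cols2: "X \<in> carrier_mat 2 2 \<Longrightarrow> colsN X = {colv X 0, colv X 1}"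
  unfolding colsN_def by (auto simp: lessThan_def numeral_2_eq_2 less_Suc_eq)

lemma Div1_cols2: "X \<in> carrier_mat 2 2 \<Longrightarrow>
  Div1 (colsN X) = {c. c dvd X$$(0,0) \<and> c dvd X$$(0,1) \<and> c dvd X$$(1,0) \<and> c dvd X$$(1,1)}"
  by (auto simp: cols2 Div1_def colv_def)

lemma Div2_cols2: "X \<in> carrier_mat 2 2 \<Longrightarrow>
  Div2 (colsN X) = {c. c dvd det2 (colv X 0) (colv X 1)}"
  by (auto simp: cols2 Div2_def det2_def colv_def dvd_minus_iff algebra_simps)

definition lceq where "lceq W W' \<longleftrightarrow> W \<subseteq> lc W' \<and> W' \<subseteq> lc W"

lemma lceq_Div: "lceq W W' \<Longrightarrow> Div1 W = Div1 W' \<and> Div2 W = Div2 W'"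
  unfolding lceq_def using Div1_sub Div2_sub by blast

lemma lceq_sym: "lceq W W' \<Longrightarrow> lceq W' W" by (auto simp: lceq_def)
lemma lceq_trans: "lceq W W' \<Longrightarrow> lceq W' W'' \<Longrightarrow> lceq W W''"
  unfolding lceq_def using lc_trans by blast
lemma lceq_un: "lceq W1 W1' \<Longrightarrow> lceq W2 W2' \<Longrightarrow> lceq (W1 \<union> W2) (W1' \<union> W2')"
  unfolding lceq_def using lc_mono by blast

lemma lceq_right: assumes "X \<in> carrier_mat 2 n" "Q \<in> carrier_mat n n" "Q' \<in> carrier_mat n n" "Q * Q' = 1\<^sub>m n"
  shows "lceq (colsN X) (colsN (X * Q))"
proof -
  have "X = X * Q * Q'" using assms by (simp add: right_mult_one_mat)
  then have "colsN X \<subseteq> lc (colsN (X*Q))" using cols_mult_lc[of "X*Q" n Q' n] assms by auto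
  then show ?thesis unfolding lceq_def using cols_mult_lc[of X n Q n] assms by auto
qed

lemma bezout_edd: assumes edd: "elementary_divisor_domain TYPE('a::idom)"
  shows "\<exists>p q. (p*a+q*b) dvd a \<and> (p*a+q*b) dvd (b::'a)"
proof -
  define M :: "'a mat" where "M = mat 1 2 (\<lambda>(i,j). if j = 0 then a else b)"
  have Mc: "M \<in> carrier_mat 1 2" by (simp add: M_def)
  have "\<exists>D. is_d_matrix D \<and> mat_equiv M D" using edd Mc unfolding elementary_divisor_domain_def by blast
  then obtain D P Q where D: "is_d_matrix D" and P: "P \<in> carrier_mat 1 1" "invertible_mat P"
    and Q: "Q \<in> carrier_mat 2 2" "invertible_mat Q" and eq: "P * M * Q = D"
    using Mc unfolding mat_equiv_def by auto
  obtain P' where P': "P' \<in> carrier_mat 1 1" "P' * P = 1\<^sub>m 1" using inv_ex[OF P(2,1)] by blast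
  obtain Q' where Q': "Q' \<in> carrier_mat 2 2" "Q * Q' = 1\<^sub>m 2" using inv_ex[OF Q(2,1)] by blast
  define N where "N = M * Q"
  have Nc: "N \<in> carrier_mat 1 2" using Mc Q by (simp add: N_def)
  have Dc: "D \<in> carrier_mat 1 2" using eq P Mc Q by auto
  have D01: "D $$ (0,1) = 0" using D Dc unfolding is_d_matrix_def by auto
  have "N = 1\<^sub>m 1 * N" using Nc by (simp add: left_mult_one_mat)
  also have "\<dots> = P' * P * N" using P' by simp
  also have "\<dots> = P' * (P * N)" by (rule assoc_mult_mat[OF P'(1) P(1) Nc])
  also have "P * N = P * M * Q" unfolding N_def using P Mc Q by (simp add: assoc_mult_mat)
  finally have ND: "N = P' * D" using eq by simp
  have N01: "N $$ (0,1) = 0" unfolding ND using P' Dc D01 by (simp add: scalar_prod_def)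
  have MN: "M = N * Q'" unfolding N_def using Mc Q Q' by (simp add: right_mult_one_mat)
  have Ma: "M$$(0,0) = a" "M$$(0,1) = b" by (simp_all add: M_def)
  have "a = (N*Q')$$(0,0)" using MN Ma by simp
  also have "\<dots> = N$$(0,0)*Q'$$(0,0) + N$$(0,1)*Q'$$(1,0)" by (rule mult2[OF Nc Q'(1)]) auto
  finally have a: "a = N$$(0,0)*Q'$$(0,0)" using N01 by simp
  have "b = (N*Q')$$(0,1)" using MN Ma by simp
  also have "\<dots> = N$$(0,0)*Q'$$(0,1) + N$$(0,1)*Q'$$(1,1)" by (rule mult2[OF Nc Q'(1)]) auto
  finally have b: "b = N$$(0,0)*Q'$$(0,1)" using N01 by simp
  have "N$$(0,0) = M$$(0,0) * Q$$(0,0) + M$$(0,1) * Q$$(1,0)" 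
    unfolding N_def by (rule mult2[OF Mc Q(1)]) auto
  then have "N$$(0,0) = Q$$(0,0) * a + Q$$(1,0) * b" using Ma by (simp add: mult.commute)
  then show ?thesis using a b by (metis dvd_triv_left)
qed



lemma unit_cancel: fixes u x z :: "'a::comm_ring_1"
  assumes "u dvd 1" "x dvd z*u" shows "x dvd z"
proof -
  obtain v where "1 = u*v" using assms(1) by (auto elim: dvdE)
  then have "z = z*u*v" by (simp add: mult.assoc)
  then show ?thesis using assms(2) by (metis dvd_mult2)
qed

lemma Div1_expl: fixes a b c d e1 e2 f1 f2 :: "'a::idom"
  assumes "e1 dvd e2" "f1 dvd f2" "(a*d - b*c) dvd 1"
  shows "x \<in> Div1 {(a*e1, c*e1), (b*e2, d*e2), (f1,0), (0,f2)} \<longleftrightarrow> x dvd e1 \<and> x dvd f1"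
proof
  assume "x \<in> Div1 {(a*e1, c*e1), (b*e2, d*e2), (f1,0), (0,f2)}"
  then have h: "x dvd a*e1" "x dvd c*e1" "x dvd f1" by (auto simp: Div1_def)
  have "x dvd d*(a*e1) - b*(c*e1)" using h by (simp add: dvd_diff)
  also have "d*(a*e1) - b*(c*e1) = e1 * (a*d - b*c)" by (simp add: algebra_simps)
  finally show "x dvd e1 \<and> x dvd f1" using h unit_cancel[OF assms(3)] by blast
next
  assume "x dvd e1 \<and> x dvd f1"
  then show "x \<in> Div1 {(a*e1, c*e1), (b*e2, d*e2), (f1,0), (0,f2)}"
    using assms by (auto simp: Div1_def intro: dvd_trans)
qed

lemma Div2_expl: fixes a b c d e1 e2 f1 f2 :: "'a::idom"
  shows "x \<in> Div2 {(a*e1, c*e1), (b*e2, d*e2), (f1,0), (0,f2)} \<longleftrightarrow>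
     x dvd (a*d - b*c)*(e1*e2) \<and> x dvd c*(e1*f1) \<and> x dvd a*(e1*f2) \<and> x dvd d*(e2*f1)
     \<and> x dvd b*(e2*f2) \<and> x dvd f1*f2"
proof -
  have dd: "det2 (a*e1, c*e1) (a*e1, c*e1) = 0"
    "det2 (a*e1, c*e1) (b*e2, d*e2) = (a*d - b*c)*(e1*e2)"
    "det2 (a*e1, c*e1) (f1,0) = - (c*(e1*f1))"
    "det2 (a*e1, c*e1) (0,f2) = a*(e1*f2)"
    "det2 (b*e2, d*e2) (a*e1, c*e1) = - ((a*d - b*c)*(e1*e2))"
    "det2 (b*e2, d*e2) (b*e2, d*e2) = 0"
    "det2 (b*e2, d*e2) (f1,0) = - (d*(e2*f1))"
    "det2 (b*e2, d*e2) (0,f2) = b*(e2*f2)"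
    "det2 (f1,0) (a*e1, c*e1) = - (- (c*(e1*f1)))"
    "det2 (f1,0) (b*e2, d*e2) = - (- (d*(e2*f1)))"
    "det2 (f1,0) (f1,0) = 0"
    "det2 (f1,0) (0,f2) = f1*f2"
    "det2 (0,f2) (a*e1, c*e1) = - (a*(e1*f2))"
    "det2 (0,f2) (b*e2, d*e2) = - (b*(e2*f2))"
    "det2 (0,f2) (f1,0) = - (f1*f2)"
    "det2 (0,f2) (0,f2) = 0"
    by (simp_all add: det2_def algebra_simps)
  show ?thesis unfolding Div2_def by (simp only: mem_Collect_eq ball_simps dd dvd_minus_iff dvd_0_right simp_thms) blast
qed

lemma arith_main: fixes a b c d e1 e2 f1 f2 g l y al be p q r x :: "'a::idom"
  assumes e: "e1 dvd e2" and f: "f1 dvd f2" and u: "(a*d - b*c) dvd 1"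
    and g: "g dvd e1" "g dvd f1" "g = al*e1 + be*f1"
    and l: "e1 dvd l" "f1 dvd l" "\<And>m. e1 dvd m \<Longrightarrow> f1 dvd m \<Longrightarrow> l dvd m"
    and y: "y dvd e2" "y dvd f2" "y dvd l*c" "y = p*e2 + q*f2 + r*(l*c)"
  shows "(x dvd (a*d - b*c)*(e1*e2) \<and> x dvd c*(e1*f1) \<and> x dvd a*(e1*f2) \<and> x dvd d*(e2*f1)
     \<and> x dvd b*(e2*f2) \<and> x dvd f1*f2) \<longleftrightarrow> x dvd g*y"
proof -
  obtain t where t: "f1 = g*t" using g(2) by (auto elim: dvdE)
  obtain w where w: "e1 = g*w" using g(1) by (auto elim: dvdE)
  have "l dvd e1*t" using l(3)[of "e1*t"] by (metis dvd_triv_left mult.commute mult.left_commute t w)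
  then have gl: "g*l dvd e1*f1" using t by (metis mult.left_commute mult_dvd_mono dvd_refl)
  have lg: "e1*f1 dvd g*l"
  proof -
    have "e1*f1 dvd e1*l" using l(2) by (simp add: mult_dvd_mono)
    moreover have "e1*f1 dvd f1*l" using l(1) by (metis mult.commute mult_dvd_mono dvd_refl)
    ultimately have "e1*f1 dvd al*(e1*l) + be*(f1*l)" by (simp add: dvd_add)
    then show ?thesis using g(3) by (simp add: algebra_simps)
  qed
  show ?thesis
  proof
    assume h: "x dvd (a*d - b*c)*(e1*e2) \<and> x dvd c*(e1*f1) \<and> x dvd a*(e1*f2) \<and> x dvd d*(e2*f1)
     \<and> x dvd b*(e2*f2) \<and> x dvd f1*f2"
    have x1: "x dvd e1*e2" using h unit_cancel[OF u, of x "e1*e2"] by (simp add: mult.commute)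
    have "c*(e1*f1) dvd c*(e2*f1)" using e by (simp add: mult_dvd_mono)
    then have "x dvd c*(e2*f1)" using h dvd_trans by blast
    then have "x dvd a*(d*(e2*f1)) - b*(c*(e2*f1))" using h by (simp add: dvd_diff)
    also have "a*(d*(e2*f1)) - b*(c*(e2*f1)) = (e2*f1)*(a*d - b*c)" by (simp add: algebra_simps)
    finally have x2: "x dvd e2*f1" using unit_cancel[OF u] by blast
    have "c*(e1*f1) dvd c*(e1*f2)" using f by (simp add: mult_dvd_mono)
    then have "x dvd c*(e1*f2)" using h dvd_trans by blast
    then have "x dvd d*(a*(e1*f2)) - b*(c*(e1*f2))" using h by (simp add: dvd_diff)
    also have "d*(a*(e1*f2)) - b*(c*(e1*f2)) = (e1*f2)*(a*d - b*c)" by (simp add: algebra_simps)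
    finally have x3: "x dvd e1*f2" using unit_cancel[OF u] by blast
    have "c*(e1*f1) dvd c*(g*l)" using lg by (simp add: mult_dvd_mono)
    then have x4: "x dvd c*(g*l)" using h dvd_trans by blast
    have "g*y = p*(al*(e1*e2) + be*(e2*f1)) + q*(al*(e1*f2) + be*(f1*f2)) + r*(c*(g*l))"
      using g(3) y(4) by (simp add: algebra_simps)
    moreover have "x dvd p*(al*(e1*e2) + be*(e2*f1)) + q*(al*(e1*f2) + be*(f1*f2)) + r*(c*(g*l))"
      using x1 x2 x3 x4 h by (simp add: dvd_add)
    ultimately show "x dvd g*y" by simp
  next
    assume xg: "x dvd g*y"
    have gy: "g*y dvd (a*d - b*c)*(e1*e2)" using g(1) y(1) by (simp add: mult_dvd_mono)
    have "g*y dvd g*(l*c)" using y(3) by (simp add: mult_dvd_mono)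
    also have "g*(l*c) dvd (e1*f1)*c" using gl by (metis mult.assoc mult_dvd_mono dvd_refl)
    finally have gy2: "g*y dvd c*(e1*f1)" by (simp add: mult.commute)
    have gy3: "g*y dvd a*(e1*f2)" using g(1) y(2) by (simp add: mult_dvd_mono)
    have gy4: "g*y dvd d*(e2*f1)" using g(2) y(1) by (metis dvd_mult mult.commute mult_dvd_mono)
    have "g dvd e2" using g(1) e dvd_trans by blast
    then have gy5: "g*y dvd b*(e2*f2)" using y(2) by (simp add: mult_dvd_mono)
    have gy6: "g*y dvd f1*f2" using g(2) y(2) by (simp add: mult_dvd_mono)
    show "x dvd (a*d - b*c)*(e1*e2) \<and> x dvd c*(e1*f1) \<and> x dvd a*(e1*f2) \<and> x dvd d*(e2*f1)
     \<and> x dvd b*(e2*f2) \<and> x dvd f1*f2"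
      using xg gy gy2 gy3 gy4 gy5 gy6 dvd_trans by blast
  qed
qed



lemma gcd_dvd: "is_gcd S g \<Longrightarrow> s \<in> S \<Longrightarrow> g dvd s" by (auto simp: is_gcd_def)

lemma bez2: assumes edd: "elementary_divisor_domain TYPE('a::idom)" and g: "is_gcd {a,b} (g::'a)"
  shows "\<exists>p q. g = p*a + q*b"
proof -
  obtain p q where d: "(p*a+q*b) dvd a" "(p*a+q*b) dvd b" using bezout_edd[OF edd] by blast
  have "g dvd p*a+q*b" using g by (auto simp: is_gcd_def)
  moreover have "(p*a+q*b) dvd g" using g d by (auto simp: is_gcd_def)
  then obtain k where "g = (p*a+q*b)*k" by (auto elim: dvdE)
  then have "g = (p*k)*a + (q*k)*b" by (simp add: algebra_simps)
  then show ?thesis by blast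
qed

lemma bez3: assumes edd: "elementary_divisor_domain TYPE('a::idom)" and g: "is_gcd {a,b,c} (g::'a)"
  shows "\<exists>p q r. g = p*a + q*b + r*c"
proof -
  obtain p q where d: "(p*a+q*b) dvd a" "(p*a+q*b) dvd b" using bezout_edd[OF edd] by blast
  obtain p' q' where e: "(p'*(p*a+q*b)+q'*c) dvd (p*a+q*b)" "(p'*(p*a+q*b)+q'*c) dvd c"
    using bezout_edd[OF edd] by blast
  have "(p'*(p*a+q*b)+q'*c) dvd a" "(p'*(p*a+q*b)+q'*c) dvd b" using d e(1) dvd_trans by blast+
  then have "(p'*(p*a+q*b)+q'*c) dvd g" using g e(2) unfolding is_gcd_def by blast
  then obtain k where "g = (p'*(p*a+q*b)+q'*c)*k" by (auto elim: dvdE)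
  then have "g = (p'*p*k)*a + (p'*q*k)*b + (q'*k)*c" by (simp add: algebra_simps)
  then show ?thesis by blast
qed

lemma assoc_unit: fixes a b :: "'a::idom" assumes "a dvd b" "b dvd a" shows "\<exists>u. u dvd 1 \<and> b = u*a"
proof (cases "a = 0")
  case True then show ?thesis using assms by (intro exI[of _ 1]) auto
next
  case False
  obtain k where k: "b = a*k" using assms(1) by (auto elim: dvdE)
  obtain m where m: "a = b*m" using assms(2) by (auto elim: dvdE)
  have "a*1 = a*(k*m)" using k m by (metis mult.assoc mult.commute mult_1_right)
  then have "1 = k*m" using False by (metis mult_cancel_left)
  then have "k*m = 1" by simp
  then show ?thesis using k by (intro exI[of _ k]) (auto simp: mult.commute intro: dvdI)
qed

lemma invertible_mult: assumes "invertible_mat P" "P \<in> carrier_mat n n" "invertible_mat Q" "Q \<in> carrier_mat n n"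
  shows "invertible_mat (P*Q)"
proof -
  obtain P' where P': "P' \<in> carrier_mat n n" "P * P' = 1\<^sub>m n" "P' * P = 1\<^sub>m n" using inv_ex assms by blast
  obtain Q' where Q': "Q' \<in> carrier_mat n n" "Q * Q' = 1\<^sub>m n" "Q' * Q = 1\<^sub>m n" using inv_ex assms by blast
  have "P*Q*(Q'*P') = P*(Q*(Q'*P'))" by (rule assoc_mult_mat[OF assms(2) assms(4) mult_carrier_mat[OF Q'(1) P'(1)]])
  also have "Q*(Q'*P') = (Q*Q')*P'" using assoc_mult_mat[OF assms(4) Q'(1) P'(1)] by simp
  finally have 1: "P*Q*(Q'*P') = 1\<^sub>m n" using P' Q' assms by (simp add: left_mult_one_mat)
  have "Q'*P'*(P*Q) = Q'*(P'*(P*Q))" by (rule assoc_mult_mat[OF Q'(1) P'(1) mult_carrier_mat[OF assms(2) assms(4)]])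
  also have "P'*(P*Q) = (P'*P)*Q" using assoc_mult_mat[OF P'(1) assms(2) assms(4)] by simp
  finally have 2: "Q'*P'*(P*Q) = 1\<^sub>m n" using P' Q' assms by (simp add: left_mult_one_mat)
  show ?thesis unfolding invertible_mat_def inverts_mat_def using 1 2 assms P' Q'
    by (intro conjI exI[of _ "Q'*P'"]) (auto simp: square_mat.simps)
qed

lemma det_mult_id: fixes a b c d e f g h :: "'a::comm_ring_1"
  shows "(a*e + b*g)*(c*f + d*h) - (a*f + b*h)*(c*e + d*g) = (a*d - b*c)*(e*h - f*g)"
  by (simp add: algebra_simps)

lemma det_unit: fixes X Y :: "'a::idom mat" assumes "X \<in> carrier_mat 2 2" "Y \<in> carrier_mat 2 2" "X * Y = 1\<^sub>m 2"
  shows "(X$$(0,0) * X$$(1,1) - X$$(0,1) * X$$(1,0)) dvd 1"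
proof -
  have e: "(X*Y)$$(i,j) = (if i = j then 1 else 0)" if "i<2" "j<2" for i j
    using assms that by simp
  have e00: "X$$(0,0) * Y$$(0,0) + X$$(0,1) * Y$$(1,0) = 1" using e[of 0 0] mult2[OF assms(1,2)] by simp
  have e01: "X$$(0,0) * Y$$(0,1) + X$$(0,1) * Y$$(1,1) = 0" using e[of 0 1] mult2[OF assms(1,2), of 0 1] by simp
  have e10: "X$$(1,0) * Y$$(0,0) + X$$(1,1) * Y$$(1,0) = 0" using e[of 1 0] mult2[OF assms(1,2), of 1 0] by simp
  have e11: "X$$(1,0) * Y$$(0,1) + X$$(1,1) * Y$$(1,1) = 1" using e[of 1 1] mult2[OF assms(1,2), of 1 1] by simp
  have "(X$$(0,0) * Y$$(0,0) + X$$(0,1) * Y$$(1,0)) * (X$$(1,0) * Y$$(0,1) + X$$(1,1) * Y$$(1,1))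
     - (X$$(0,0) * Y$$(0,1) + X$$(0,1) * Y$$(1,1)) * (X$$(1,0) * Y$$(0,0) + X$$(1,1) * Y$$(1,0))
     = (X$$(0,0) * X$$(1,1) - X$$(0,1) * X$$(1,0)) * (Y$$(0,0) * Y$$(1,1) - Y$$(0,1) * Y$$(1,0))"
    by (rule det_mult_id)
  then have "1 = (X$$(0,0) * X$$(1,1) - X$$(0,1) * X$$(1,0)) * (Y$$(0,0) * Y$$(1,1) - Y$$(0,1) * Y$$(1,0))"
    using e00 e01 e10 e11 by simp
  then show ?thesis by (rule dvdI)
qed

lemma diag2_idx: "diag2 a b $$ (0,0) = a" "diag2 a b $$ (0,1) = 0" "diag2 a b $$ (1,0) = 0" "diag2 a b $$ (1,1) = b"
  "diag2 a b \<in> carrier_mat 2 2"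
  by (simp_all add: diag2_def mat_diag_def)

lemma cols_SE: assumes "S \<in> carrier_mat 2 2"
  shows "colsN (S * diag2 e1 e2) = {(S$$(0,0)*e1, S$$(1,0)*e1), (S$$(0,1)*e2, S$$(1,1)*e2)}"
proof -
  have c: "S * diag2 e1 e2 \<in> carrier_mat 2 2" using mult_carrier_mat[OF assms diag2_idx(5)] .
  show ?thesis unfolding cols2[OF c] colv_def
    using mult2[OF assms diag2_idx(5), of _ _ e1 e2] by (simp add: diag2_def mat_diag_def)
qed

lemma cols_diag: "colsN (diag2 a b) = {(a,0),(0,b)}"
  unfolding cols2[OF diag2_idx(5)] colv_def by (simp add: diag2_def mat_diag_def)

lemma Div_AB: fixes A B PA QA PB QB S :: "'a::idom mat"
  assumes A: "A \<in> carrier_mat 2 2" and B: "B \<in> carrier_mat 2 2"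
    and PA: "PA \<in> carrier_mat 2 2" "invertible_mat PA"
    and QA: "QA \<in> carrier_mat 2 2" "invertible_mat QA"
    and PB: "PB \<in> carrier_mat 2 2" "invertible_mat PB"
    and QB: "QB \<in> carrier_mat 2 2" "invertible_mat QB"
    and eqA: "PA * A * QA = diag2 e1 e2"
    and eqB: "PB * B * QB = diag2 f1 f2"
    and S: "S \<in> carrier_mat 2 2" "S * PA = PB"
  shows "Div1 (colsN A \<union> colsN B) = Div1 {(S$$(0,0)*e1, S$$(1,0)*e1), (S$$(0,1)*e2, S$$(1,1)*e2), (f1,0), (0,f2)}"
    "Div2 (colsN A \<union> colsN B) = Div2 {(S$$(0,0)*e1, S$$(1,0)*e1), (S$$(0,1)*e2, S$$(1,1)*e2), (f1,0), (0,f2)}"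
    "(S$$(0,0) * S$$(1,1) - S$$(0,1) * S$$(1,0)) dvd 1"
proof -
  obtain QA' where QA': "QA' \<in> carrier_mat 2 2" "QA * QA' = 1\<^sub>m 2" using inv_ex QA by blast
  obtain QB' where QB': "QB' \<in> carrier_mat 2 2" "QB * QB' = 1\<^sub>m 2" using inv_ex QB by blast
  obtain PB' where PB': "PB' \<in> carrier_mat 2 2" "PB * PB' = 1\<^sub>m 2" "PB' * PB = 1\<^sub>m 2" using inv_ex PB by blast
  have l: "lceq (colsN A \<union> colsN B) (colsN (A*QA) \<union> colsN (B*QB))"
    by (rule lceq_un; rule lceq_right) (use A B QA QA' QB QB' in auto)
  have AQ: "A*QA \<in> carrier_mat 2 2" "B*QB \<in> carrier_mat 2 2" using A B QA QB by auto
  have "pv PB ` (colsN (A*QA) \<union> colsN (B*QB)) = colsN (PB*(A*QA)) \<union> colsN (PB*(B*QB))"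
    using cols_mult_pv[OF PB(1) AQ(1)] cols_mult_pv[OF PB(1) AQ(2)] by (simp add: image_Un)
  also have "PB*(A*QA) = S*(PA*A*QA)"
  proof -
    have "PB*(A*QA) = S*(PA*(A*QA))" using assoc_mult_mat[OF S(1) PA(1) AQ(1)] S(2) by simp
    also have "PA*(A*QA) = PA*A*QA" using assoc_mult_mat[OF PA(1) A QA(1)] by simp
    finally show ?thesis .
  qed
  also have "PB*(B*QB) = diag2 f1 f2" using eqB assoc_mult_mat[OF PB(1) B QB(1)] by simp
  also have "colsN (S*(PA*A*QA)) \<union> colsN (diag2 f1 f2) =
     {(S$$(0,0)*e1, S$$(1,0)*e1), (S$$(0,1)*e2, S$$(1,1)*e2), (f1,0), (0,f2)}"
    unfolding eqA cols_SE[OF S(1)] cols_diag by auto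
  finally have "pv PB ` (colsN (A*QA) \<union> colsN (B*QB)) =
     {(S$$(0,0)*e1, S$$(1,0)*e1), (S$$(0,1)*e2, S$$(1,1)*e2), (f1,0), (0,f2)}" .
  then show "Div1 (colsN A \<union> colsN B) = Div1 {(S$$(0,0)*e1, S$$(1,0)*e1), (S$$(0,1)*e2, S$$(1,1)*e2), (f1,0), (0,f2)}"
    "Div2 (colsN A \<union> colsN B) = Div2 {(S$$(0,0)*e1, S$$(1,0)*e1), (S$$(0,1)*e2, S$$(1,1)*e2), (f1,0), (0,f2)}"
    using lceq_Div[OF l] Div1_pv_eq[OF PB(1) PB'(1,3), of "colsN (A*QA) \<union> colsN (B*QB)"]
      Div2_pv_eq[OF PB(1) PB'(1,3), of "colsN (A*QA) \<union> colsN (B*QB)"] by simp_all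
  have "S * (PA * PB') = 1\<^sub>m 2" using assoc_mult_mat[OF S(1) PA(1) PB'(1)] S(2) PB'(2) by simp
  then show "(S$$(0,0) * S$$(1,1) - S$$(0,1) * S$$(1,0)) dvd 1"
    using det_unit[OF S(1), of "PA * PB'"] PA PB' by simp
qed



lemma lc2: "u \<in> lc {v0, v1} \<Longrightarrow> \<exists>x y. u = (x*fst v0 + y*fst v1, x*snd v0 + y*snd v1)"
proof (induction rule: lc.induct)
  case zero then show ?case by (intro exI[of _ 0]) simp
next
  case (base w)
  then show ?case
  proof
    assume "w = v0" then show ?thesis by (intro exI[of _ 1] exI[of _ 0]) simp
  next
    assume "w \<in> {v1}" then show ?thesis by (intro exI[of _ 0] exI[of _ 1]) simp
  qed
next
  case (add u v)
  then obtain x y x' y' where "u = (x*fst v0 + y*fst v1, x*snd v0 + y*snd v1)"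
    "v = (x'*fst v0 + y'*fst v1, x'*snd v0 + y'*snd v1)" by blast
  then show ?case by (intro exI[of _ "x+x'"] exI[of _ "y+y'"]) (simp add: algebra_simps)
next
  case (smul u r)
  then obtain x y where "u = (x*fst v0 + y*fst v1, x*snd v0 + y*snd v1)" by blast
  then show ?case by (intro exI[of _ "r*x"] exI[of _ "r*y"]) (simp add: algebra_simps)
qed

lemma span_mat: fixes X D0 :: "'a::comm_ring_1 mat"
  assumes X: "X \<in> carrier_mat 2 2" and D0: "D0 \<in> carrier_mat 2 2" and sub: "colsN X \<subseteq> lc (colsN D0)"
  shows "\<exists>X1. X1 \<in> carrier_mat 2 2 \<and> X = D0 * X1"
proof -
  have c0: "colv X 0 \<in> lc {colv D0 0, colv D0 1}" using sub cols2[OF X] cols2[OF D0] by auto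
  have c1: "colv X 1 \<in> lc {colv D0 0, colv D0 1}" using sub cols2[OF X] cols2[OF D0] by auto
  obtain x0 y0 where e0: "X$$(0,0) = x0 * D0$$(0,0) + y0 * D0$$(0,1)" "X$$(1,0) = x0 * D0$$(1,0) + y0 * D0$$(1,1)"
    using lc2[OF c0] by (auto simp: colv_def)
  obtain x1 y1 where e1: "X$$(0,1) = x1 * D0$$(0,0) + y1 * D0$$(0,1)" "X$$(1,1) = x1 * D0$$(1,0) + y1 * D0$$(1,1)"
    using lc2[OF c1] by (auto simp: colv_def)
  define X1 where "X1 = mat 2 2 (\<lambda>(i,j). if i = 0 then (if j = 0 then x0 else x1) else (if j = 0 then y0 else y1))"
  have X1c: "X1 \<in> carrier_mat 2 2" by (simp add: X1_def)
  have "X = D0 * X1"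
  proof (rule eq_matI)
    fix i j assume "i < dim_row (D0*X1)" "j < dim_col (D0*X1)"
    then have ij: "i < 2" "j < 2" using D0 X1c by auto
    have m: "(D0*X1)$$(i,j) = D0$$(i,0)*X1$$(0,j) + D0$$(i,1)*X1$$(1,j)" by (rule mult2[OF D0 X1c ij])
    have "i = 0 \<or> i = 1" "j = 0 \<or> j = 1" using ij by auto
    then show "X $$ (i,j) = (D0*X1)$$(i,j)" using m e0 e1
      by (auto simp: X1_def mult.commute)
  qed (use X D0 X1c in auto)
  then show ?thesis using X1c by blast
qed



lemma D0_exists: fixes A B :: "'a::idom mat"
  assumes edd: "elementary_divisor_domain TYPE('a)" and A: "A \<in> carrier_mat 2 2" and B: "B \<in> carrier_mat 2 2"
  shows "\<exists>D0. D0 \<in> carrier_mat 2 2 \<and> (\<exists>A1 B1. A1 \<in> carrier_mat 2 2 \<and> B1 \<in> carrier_mat 2 2 \<and> A = D0 * A1 \<and> B = D0 * B1)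
     \<and> colsN D0 \<subseteq> lc (colsN A \<union> colsN B)"
proof -
  define M :: "'a mat" where "M = mat 2 4 (\<lambda>(i,j). if j < 2 then A$$(i,j) else B$$(i,j-2))"
  have Mc: "M \<in> carrier_mat 2 4" by (simp add: M_def)
  have colsM: "colsN M = colsN A \<union> colsN B"
  proof
    show "colsN M \<subseteq> colsN A \<union> colsN B"
    proof
      fix u assume "u \<in> colsN M"
      then obtain j where j: "j < 4" "u = colv M j" using Mc by (auto simp: colsN_def)
      show "u \<in> colsN A \<union> colsN B"
      proof (cases "j < 2")
        case True then have "u = colv A j" using j by (simp add: colv_def M_def)
        then show ?thesis using True A by (auto simp: colsN_def)
      next
        case False then have "u = colv B (j-2)" using j by (simp add: colv_def M_def)
        then show ?thesis using False j B by (auto simp: colsN_def)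
      qed
    qed
    show "colsN A \<union> colsN B \<subseteq> colsN M"
    proof
      fix u assume "u \<in> colsN A \<union> colsN B"
      then show "u \<in> colsN M"
      proof
        assume "u \<in> colsN A"
        then obtain j where j: "j < 2" "u = colv A j" using A by (auto simp: colsN_def)
        then have "u = colv M j" by (simp add: colv_def M_def)
        then show ?thesis using j Mc by (auto simp: colsN_def)
      next
        assume "u \<in> colsN B"
        then obtain j where j: "j < 2" "u = colv B j" using B by (auto simp: colsN_def)
        then have "u = colv M (j+2)" by (simp add: colv_def M_def)
        then show ?thesis using j Mc by (auto simp: colsN_def)
      qed
    qed
  qed
  have "\<exists>D. is_d_matrix D \<and> mat_equiv M D" using edd Mc unfolding elementary_divisor_domain_def by blast
  then obtain Dd P Q where Dd: "is_d_matrix Dd" and P: "P \<in> carrier_mat 2 2" "invertible_mat P"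
    and Q: "Q \<in> carrier_mat 4 4" "invertible_mat Q" and eq: "P * M * Q = Dd"
    using Mc unfolding mat_equiv_def by auto
  obtain P' where P': "P' \<in> carrier_mat 2 2" "P' * P = 1\<^sub>m 2" using inv_ex[OF P(2,1)] by blast
  obtain Q' where Q': "Q' \<in> carrier_mat 4 4" "Q * Q' = 1\<^sub>m 4" using inv_ex[OF Q(2,1)] by blast
  define N where "N = M * Q"
  have Nc: "N \<in> carrier_mat 2 4" using Mc Q by (simp add: N_def)
  have Ddc: "Dd \<in> carrier_mat 2 4" using eq P Mc Q by auto
  have Dz: "Dd $$ (k,j) = 0" if "k < 2" "2 \<le> j" "j < 4" for k j
    using Dd Ddc that unfolding is_d_matrix_def by auto
  have "N = 1\<^sub>m 2 * N" using Nc by (simp add: left_mult_one_mat)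
  also have "\<dots> = P' * P * N" using P' by simp
  also have "\<dots> = P' * (P * N)" by (rule assoc_mult_mat[OF P'(1) P(1) Nc])
  also have "P * N = P * M * Q" unfolding N_def using P Mc Q by (simp add: assoc_mult_mat)
  finally have ND: "N = P' * Dd" using eq by simp
  have Nz: "colv N j = (0,0)" if "2 \<le> j" "j < 4" for j
    using that mult2[OF P'(1) Ddc, of 0 j] mult2[OF P'(1) Ddc, of 1 j] Dz[of 0 j] Dz[of 1 j]
    by (simp add: colv_def ND)
  define D0 where "D0 = mat 2 2 (\<lambda>(i,j). N$$(i,j))"
  have D0c: "D0 \<in> carrier_mat 2 2" by (simp add: D0_def)
  have D0N: "colv D0 j = colv N j" if "j < 2" for j using that by (simp add: colv_def D0_def)
  have s1: "colsN D0 \<subseteq> colsN N" using D0c Nc D0N by (auto simp: colsN_def)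
  have s2: "colsN N \<subseteq> lc (colsN M)" unfolding N_def by (rule cols_mult_lc[OF Mc Q(1)])
  have MN: "M = N * Q'" unfolding N_def using Mc Q Q' by (simp add: right_mult_one_mat)
  have s3: "colsN M \<subseteq> lc (colsN N)" unfolding MN by (rule cols_mult_lc[OF Nc Q'(1)])
  have s4: "colsN N \<subseteq> lc (colsN D0)"
  proof
    fix u assume "u \<in> colsN N"
    then obtain j where j: "j < 4" "u = colv N j" using Nc by (auto simp: colsN_def)
    show "u \<in> lc (colsN D0)"
    proof (cases "j < 2")
      case True then have "u \<in> colsN D0" using j D0N D0c by (auto simp: colsN_def)
      then show ?thesis by (rule lc.base)
    next
      case False then show ?thesis using j Nz lc.zero by simp
    qed
  qed
  have sAB: "colsN A \<union> colsN B \<subseteq> lc (colsN D0)" using s3 s4 lc_trans colsM by blast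
  obtain A1 where A1: "A1 \<in> carrier_mat 2 2" "A = D0 * A1" using span_mat[OF A D0c] sAB by blast
  obtain B1 where B1: "B1 \<in> carrier_mat 2 2" "B = D0 * B1" using span_mat[OF B D0c] sAB by blast
  have "colsN D0 \<subseteq> lc (colsN A \<union> colsN B)" using s1 s2 colsM by auto
  then show ?thesis using D0c A1 B1 by blast
qed



lemma Div_gcd: fixes A B D :: "'a::idom mat"
  assumes edd: "elementary_divisor_domain TYPE('a)" and A: "A \<in> carrier_mat 2 2" and B: "B \<in> carrier_mat 2 2"
    and D: "is_left_gcd 2 A B D"
  shows "Div1 (colsN D) = Div1 (colsN A \<union> colsN B)" "Div2 (colsN D) = Div2 (colsN A \<union> colsN B)"
proof -
  obtain D0 A1 B1 where D0: "D0 \<in> carrier_mat 2 2" "A1 \<in> carrier_mat 2 2" "B1 \<in> carrier_mat 2 2"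
     "A = D0 * A1" "B = D0 * B1" "colsN D0 \<subseteq> lc (colsN A \<union> colsN B)"
    using D0_exists[OF edd A B] by blast
  have Dc: "D \<in> carrier_mat 2 2" using D by (simp add: is_left_gcd_def)
  have Dmax: "\<forall>D'. D' \<in> carrier_mat 2 2 \<longrightarrow>
        (\<exists>A1 B1. A1 \<in> carrier_mat 2 2 \<and> B1 \<in> carrier_mat 2 2 \<and> A = D' * A1 \<and> B = D' * B1) \<longrightarrow>
        (\<exists>C. C \<in> carrier_mat 2 2 \<and> D = D' * C)"
   and Ddiv: "\<exists>A1 B1. A1 \<in> carrier_mat 2 2 \<and> B1 \<in> carrier_mat 2 2 \<and> A = D * A1 \<and> B = D * B1"
    using D unfolding is_left_gcd_def by simp_all
  have "\<exists>A1 B1. A1 \<in> carrier_mat 2 2 \<and> B1 \<in> carrier_mat 2 2 \<and> A = D0 * A1 \<and> B = D0 * B1"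
    using D0(2-5) by blast
  then obtain C where C: "C \<in> carrier_mat 2 2" "D = D0 * C" using Dmax D0(1) by blast
  obtain A2 B2 where AB2: "A2 \<in> carrier_mat 2 2" "B2 \<in> carrier_mat 2 2" "A = D * A2" "B = D * B2"
    using Ddiv by blast
  have "colsN D \<subseteq> lc (colsN D0)" unfolding C(2) by (rule cols_mult_lc[OF D0(1) C(1)])
  then have s1: "colsN D \<subseteq> lc (colsN A \<union> colsN B)" using D0(6) lc_trans by blast
  have "colsN A \<subseteq> lc (colsN D)" using cols_mult_lc[OF Dc AB2(1)] AB2(3) by simp
  moreover have "colsN B \<subseteq> lc (colsN D)" using cols_mult_lc[OF Dc AB2(2)] AB2(4) by simp
  ultimately have s2: "colsN A \<union> colsN B \<subseteq> lc (colsN D)" by blast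
  have "lceq (colsN D) (colsN A \<union> colsN B)" using s1 s2 by (simp add: lceq_def)
  then show "Div1 (colsN D) = Div1 (colsN A \<union> colsN B)" "Div2 (colsN D) = Div2 (colsN A \<union> colsN B)"
    using lceq_Div by blast+
qed

lemma d_form: fixes D :: "'a::idom mat"
  assumes edd: "elementary_divisor_domain TYPE('a)" and Dc: "D \<in> carrier_mat 2 2"
  shows "\<exists>p1 p2 P Q. P \<in> carrier_mat 2 2 \<and> invertible_mat P \<and> Q \<in> carrier_mat 2 2 \<and> invertible_mat Q
    \<and> P * D * Q = diag2 p1 p2 \<and> p1 dvd p2 \<and> Div1 (colsN D) = {c. c dvd p1} \<and> Div2 (colsN D) = {c. c dvd p1*p2}"
proof -
  have "\<exists>Dd. is_d_matrix Dd \<and> mat_equiv D Dd"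
    using edd Dc unfolding elementary_divisor_domain_def by blast
  then obtain Dd P Q where Dd: "is_d_matrix Dd" and P: "P \<in> carrier_mat 2 2" "invertible_mat P"
    and Q: "Q \<in> carrier_mat 2 2" "invertible_mat Q" and eq: "P * D * Q = Dd"
    using Dc unfolding mat_equiv_def by auto
  obtain P' where P': "P' \<in> carrier_mat 2 2" "P' * P = 1\<^sub>m 2" using inv_ex[OF P(2,1)] by blast
  obtain Q' where Q': "Q' \<in> carrier_mat 2 2" "Q * Q' = 1\<^sub>m 2" using inv_ex[OF Q(2,1)] by blast
  have Ddc: "Dd \<in> carrier_mat 2 2" using eq P Dc Q by auto
  define p1 where "p1 = Dd$$(0,0)"
  define p2 where "p2 = Dd$$(1,1)"
  have offa: "\<forall>i j. i < 2 \<longrightarrow> j < 2 \<longrightarrow> i \<noteq> j \<longrightarrow> Dd $$ (i,j) = 0"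
    and pda: "\<forall>i. Suc i < 2 \<longrightarrow> Dd $$ (i,i) dvd Dd $$ (Suc i, Suc i)"
    using Dd Ddc unfolding is_d_matrix_def by simp_all
  have off: "Dd$$(0,1) = 0" "Dd$$(1,0) = 0" using offa[rule_format, of 0 1] offa[rule_format, of 1 0] by simp_all
  have pd: "p1 dvd p2" using pda[rule_format, of 0] unfolding p1_def p2_def by simp
  have Ddiag: "Dd = diag2 p1 p2"
  proof (rule eq_matI)
    fix i j assume "i < dim_row (diag2 p1 p2)" "j < dim_col (diag2 p1 p2)"
    then have "i = 0 \<or> i = 1" "j = 0 \<or> j = 1" by (auto simp: diag2_def mat_diag_def)
    then show "Dd$$(i,j) = diag2 p1 p2 $$ (i,j)" using off by (auto simp: diag2_def mat_diag_def p1_def p2_def)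
  qed (use Ddc diag2_idx(5) in auto)
  have DQ: "D * Q \<in> carrier_mat 2 2" using Dc Q by auto
  have "colsN Dd = colsN (P * (D * Q))" using eq assoc_mult_mat[OF P(1) Dc Q(1)] by simp
  also have "\<dots> = pv P ` colsN (D*Q)" by (rule cols_mult_pv[OF P(1) DQ])
  finally have cD: "colsN Dd = pv P ` colsN (D*Q)" .
  have l: "lceq (colsN D) (colsN (D*Q))" by (rule lceq_right[OF Dc Q(1) Q'])
  have E1: "Div1 (colsN D) = Div1 (colsN Dd)"
    using lceq_Div[OF l] Div1_pv_eq[OF P(1) P'] cD by simp
  have E2: "Div2 (colsN D) = Div2 (colsN Dd)"
    using lceq_Div[OF l] Div2_pv_eq[OF P(1) P'] cD by simp
  have F1: "Div1 (colsN Dd) = {c. c dvd p1}" unfolding Ddiag cols_diag Div1_def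
    by (auto intro: dvd_trans[OF _ pd])
  have dd: "det2 (p1,0) (p1,0) = 0" "det2 (p1,0) (0,p2) = p1*p2" "det2 (0,p2) (p1,0) = - (p1*p2)"
    "det2 (0,p2) (0,p2) = 0" by (simp_all add: det2_def mult.commute)
  have F2: "Div2 (colsN Dd) = {c. c dvd p1*p2}" unfolding Ddiag cols_diag Div2_def
    by (simp only: ball_simps dd dvd_minus_iff dvd_0_right simp_thms)
  have eq2: "P * D * Q = diag2 p1 p2" using eq Ddiag by simp
  show ?thesis
    by (intro exI[of _ p1] exI[of _ p2] exI[of _ P] exI[of _ Q] conjI P Q eq2 pd)
       (simp_all only: E1 E2 F1 F2)
qed



lemma dmat_dvd: "is_d_matrix (diag2 a b) \<Longrightarrow> a dvd b"
  unfolding is_d_matrix_def using diag2_idx(5)[of a b] by (auto simp: diag2_def mat_diag_def)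

lemma zero_gcd: fixes g :: "'a::idom" assumes "is_gcd S g" "\<forall>s\<in>S. s = 0" shows "g = 0"
proof -
  have "\<forall>s\<in>S. (0::'a) dvd s" using assms(2) by simp
  then have "0 dvd g" using assms(1) unfolding is_gcd_def by blast
  then show ?thesis by simp
qed

lemma key1: fixes A B PA QA PB QB S :: "'a::idom mat"
  assumes edd: "elementary_divisor_domain TYPE('a)"
    and A: "A \<in> carrier_mat 2 2" and B: "B \<in> carrier_mat 2 2"
    and E: "e1 dvd e2" and F: "f1 dvd f2"
    and PA: "PA \<in> carrier_mat 2 2" "invertible_mat PA"
    and QA: "QA \<in> carrier_mat 2 2" "invertible_mat QA"
    and PB: "PB \<in> carrier_mat 2 2" "invertible_mat PB"
    and QB: "QB \<in> carrier_mat 2 2" "invertible_mat QB"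
    and eqA: "PA * A * QA = diag2 e1 e2"
    and eqB: "PB * B * QB = diag2 f1 f2"
    and S: "S \<in> carrier_mat 2 2" "S * PA = PB"
    and g0: "g0 dvd e1" "g0 dvd f1" "g0 = al*e1 + be*f1"
    and l: "is_lcm e1 f1 l"
    and y: "y dvd e2" "y dvd f2" "y dvd l * S$$(1,0)" "y = p*e2 + q*f2 + r*(l*S$$(1,0))"
  shows "Div2 (colsN A \<union> colsN B) = {c. c dvd g0*y}"
proof -
  note AB = Div_AB[OF A B PA QA PB QB eqA eqB S]
  have l': "e1 dvd l" "f1 dvd l" "\<And>m. e1 dvd m \<Longrightarrow> f1 dvd m \<Longrightarrow> l dvd m" using l by (auto simp: is_lcm_def)
  have "c \<in> Div2 (colsN A \<union> colsN B) \<longleftrightarrow> c dvd g0*y" for c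
    unfolding AB(2) Div2_expl by (rule arith_main[OF E F AB(3) g0 l' y])
  then show ?thesis by blast
qed

theorem theorem2p15:
  fixes A B P\<^sub>A Q\<^sub>A P\<^sub>B Q\<^sub>B S :: "'a::idom mat"
    and \<epsilon>\<^sub>1 \<epsilon>\<^sub>2 \<delta>\<^sub>1 \<delta>\<^sub>2 :: 'a
  assumes edd: "elementary_divisor_domain TYPE('a)"
    and A: "A \<in> carrier_mat 2 2" and B: "B \<in> carrier_mat 2 2"
    and E: "is_d_matrix (diag2 \<epsilon>\<^sub>1 \<epsilon>\<^sub>2)" and \<Delta>: "is_d_matrix (diag2 \<delta>\<^sub>1 \<delta>\<^sub>2)"
    and PA: "P\<^sub>A \<in> carrier_mat 2 2" "invertible_mat P\<^sub>A"
    and QA: "Q\<^sub>A \<in> carrier_mat 2 2" "invertible_mat Q\<^sub>A"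
    and PB: "P\<^sub>B \<in> carrier_mat 2 2" "invertible_mat P\<^sub>B"
    and QB: "Q\<^sub>B \<in> carrier_mat 2 2" "invertible_mat Q\<^sub>B"
    and eqA: "P\<^sub>A * A * Q\<^sub>A = diag2 \<epsilon>\<^sub>1 \<epsilon>\<^sub>2"
    and eqB: "P\<^sub>B * B * Q\<^sub>B = diag2 \<delta>\<^sub>1 \<delta>\<^sub>2"
    and S: "S \<in> carrier_mat 2 2" "S * P\<^sub>A = P\<^sub>B"   \<comment> \<open>S = P_B P_A^{-1}\<close>
  shows
    "(\<forall>g l x P\<^sub>A' Q\<^sub>A' P\<^sub>B' Q\<^sub>B' S' g' l' x'.
        is_gcd {\<epsilon>\<^sub>2, \<delta>\<^sub>2} g \<and> is_lcm \<epsilon>\<^sub>1 \<delta>\<^sub>1 l \<and> is_gcd {g, S $$ (1,0) * l} x \<and>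
        P\<^sub>A' \<in> carrier_mat 2 2 \<and> invertible_mat P\<^sub>A' \<and>
        Q\<^sub>A' \<in> carrier_mat 2 2 \<and> invertible_mat Q\<^sub>A' \<and>
        P\<^sub>B' \<in> carrier_mat 2 2 \<and> invertible_mat P\<^sub>B' \<and>
        Q\<^sub>B' \<in> carrier_mat 2 2 \<and> invertible_mat Q\<^sub>B' \<and>
        P\<^sub>A' * A * Q\<^sub>A' = diag2 \<epsilon>\<^sub>1 \<epsilon>\<^sub>2 \<and> P\<^sub>B' * B * Q\<^sub>B' = diag2 \<delta>\<^sub>1 \<delta>\<^sub>2 \<and>
        S' \<in> carrier_mat 2 2 \<and> S' * P\<^sub>A' = P\<^sub>B' \<and>
        is_gcd {\<epsilon>\<^sub>2, \<delta>\<^sub>2} g' \<and> is_lcm \<epsilon>\<^sub>1 \<delta>\<^sub>1 l' \<and> is_gcd {g', S' $$ (1,0) * l'} x'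
        \<longrightarrow> x dvd x' \<and> x' dvd x)
     \<and>
     (\<forall>D g\<^sub>1 l g\<^sub>2.
        is_left_gcd 2 A B D \<and> is_gcd {\<epsilon>\<^sub>1, \<delta>\<^sub>1} g\<^sub>1 \<and> is_lcm \<epsilon>\<^sub>1 \<delta>\<^sub>1 l \<and>
        is_gcd {\<epsilon>\<^sub>2, \<delta>\<^sub>2, l * S $$ (1,0)} g\<^sub>2
        \<longrightarrow> is_d_matrix (diag2 g\<^sub>1 g\<^sub>2) \<and> mat_equiv D (diag2 g\<^sub>1 g\<^sub>2))"
proof -
  have e12: "\<epsilon>\<^sub>1 dvd \<epsilon>\<^sub>2" using dmat_dvd[OF E] .
  have d12: "\<delta>\<^sub>1 dvd \<delta>\<^sub>2" using dmat_dvd[OF \<Delta>] .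
  obtain al be where g0: "(al*\<epsilon>\<^sub>1 + be*\<delta>\<^sub>1) dvd \<epsilon>\<^sub>1" "(al*\<epsilon>\<^sub>1 + be*\<delta>\<^sub>1) dvd \<delta>\<^sub>1"
    using bezout_edd[OF edd] by blast
  define g0 where "g0 = al*\<epsilon>\<^sub>1 + be*\<delta>\<^sub>1"
  have g0': "g0 dvd \<epsilon>\<^sub>1" "g0 dvd \<delta>\<^sub>1" "g0 = al*\<epsilon>\<^sub>1 + be*\<delta>\<^sub>1" using g0 by (simp_all add: g0_def)
  have K: "Div2 (colsN A \<union> colsN B) = {c. c dvd g0*x}"
    if H: "is_gcd {\<epsilon>\<^sub>2, \<delta>\<^sub>2} g" "is_lcm \<epsilon>\<^sub>1 \<delta>\<^sub>1 l" "is_gcd {g, S1 $$ (1,0) * l} x"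
      "PA1 \<in> carrier_mat 2 2" "invertible_mat PA1" "QA1 \<in> carrier_mat 2 2" "invertible_mat QA1"
      "PB1 \<in> carrier_mat 2 2" "invertible_mat PB1" "QB1 \<in> carrier_mat 2 2" "invertible_mat QB1"
      "PA1 * A * QA1 = diag2 \<epsilon>\<^sub>1 \<epsilon>\<^sub>2" "PB1 * B * QB1 = diag2 \<delta>\<^sub>1 \<delta>\<^sub>2"
      "S1 \<in> carrier_mat 2 2" "S1 * PA1 = PB1"
    for g l x PA1 QA1 PB1 QB1 S1
  proof -
    obtain p q where pq: "x = p*g + q*(S1 $$ (1,0) * l)" using bez2[OF edd H(3)] by blast
    obtain p' q' where pq': "g = p'*\<epsilon>\<^sub>2 + q'*\<delta>\<^sub>2" using bez2[OF edd H(1)] by blast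
    have xg: "x dvd g" "x dvd S1 $$ (1,0) * l" using H(3) by (auto simp: is_gcd_def)
    have ge: "g dvd \<epsilon>\<^sub>2" "g dvd \<delta>\<^sub>2" using H(1) by (auto simp: is_gcd_def)
    have y1: "x dvd \<epsilon>\<^sub>2" by (rule dvd_trans[OF xg(1) ge(1)])
    have y2: "x dvd \<delta>\<^sub>2" by (rule dvd_trans[OF xg(1) ge(2)])
    have y3: "x dvd l * S1 $$ (1,0)" using xg(2) by (simp add: mult.commute)
    have y4: "x = (p*p')*\<epsilon>\<^sub>2 + (p*q')*\<delta>\<^sub>2 + q*(l * S1 $$ (1,0))"
      using pq pq' by (simp add: algebra_simps)
    note y = y1 y2 y3 y4
    show ?thesis by (rule key1[OF edd A B e12 d12 H(4-15) g0' H(2) y])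
  qed
  show ?thesis
  proof (rule conjI; intro allI impI)
    fix g l x PA1 QA1 PB1 QB1 S1 g' l' x'
    assume H: "is_gcd {\<epsilon>\<^sub>2, \<delta>\<^sub>2} g \<and> is_lcm \<epsilon>\<^sub>1 \<delta>\<^sub>1 l \<and> is_gcd {g, S $$ (1,0) * l} x \<and>
        PA1 \<in> carrier_mat 2 2 \<and> invertible_mat PA1 \<and>
        QA1 \<in> carrier_mat 2 2 \<and> invertible_mat QA1 \<and>
        PB1 \<in> carrier_mat 2 2 \<and> invertible_mat PB1 \<and>
        QB1 \<in> carrier_mat 2 2 \<and> invertible_mat QB1 \<and>
        PA1 * A * QA1 = diag2 \<epsilon>\<^sub>1 \<epsilon>\<^sub>2 \<and> PB1 * B * QB1 = diag2 \<delta>\<^sub>1 \<delta>\<^sub>2 \<and>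
        S1 \<in> carrier_mat 2 2 \<and> S1 * PA1 = PB1 \<and>
        is_gcd {\<epsilon>\<^sub>2, \<delta>\<^sub>2} g' \<and> is_lcm \<epsilon>\<^sub>1 \<delta>\<^sub>1 l' \<and> is_gcd {g', S1 $$ (1,0) * l'} x'"
    have K1: "Div2 (colsN A \<union> colsN B) = {c. c dvd g0*x}"
      by (rule K[of g l S x P\<^sub>A Q\<^sub>A P\<^sub>B Q\<^sub>B]) (use H PA QA PB QB eqA eqB S in blast)+
    have K2: "Div2 (colsN A \<union> colsN B) = {c. c dvd g0*x'}"
      by (rule K[of g' l' S1 x' PA1 QA1 PB1 QB1]) (use H in blast)+
    have eqs: "{c. c dvd g0*x} = {c. c dvd g0*x'}" using K1 K2 by simp
    have "g0*x' \<in> {c. c dvd g0*x}" unfolding eqs by simp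
    then have m2: "g0*x' dvd g0*x" by simp
    have "g0*x \<in> {c. c dvd g0*x'}" unfolding eqs[symmetric] by simp
    then have m1: "g0*x dvd g0*x'" by simp
    note m = m1 m2
    show "x dvd x' \<and> x' dvd x"
    proof (cases "g0 = 0")
      case False
      have "x dvd x'" using m(1) False by simp
      moreover have "x' dvd x" using m(2) False by simp
      ultimately show ?thesis by simp
    next
      case True
      then have z: "\<epsilon>\<^sub>1 = 0" "\<delta>\<^sub>1 = 0" using g0' by auto
      then have z2: "\<epsilon>\<^sub>2 = 0" "\<delta>\<^sub>2 = 0" using e12 d12 by auto
      have Hg: "is_gcd {\<epsilon>\<^sub>2, \<delta>\<^sub>2} g" "is_gcd {\<epsilon>\<^sub>2, \<delta>\<^sub>2} g'"
        "is_lcm \<epsilon>\<^sub>1 \<delta>\<^sub>1 l" "is_lcm \<epsilon>\<^sub>1 \<delta>\<^sub>1 l'"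
        "is_gcd {g, S $$ (1,0) * l} x" "is_gcd {g', S1 $$ (1,0) * l'} x'" using H by simp_all
      have "g = 0" "g' = 0" using zero_gcd[OF Hg(1)] zero_gcd[OF Hg(2)] z2 by simp_all
      moreover have "l = 0" "l' = 0" using Hg(3,4) z by (simp_all add: is_lcm_def)
      ultimately have "x = 0" "x' = 0" using zero_gcd[OF Hg(5)] zero_gcd[OF Hg(6)] by simp_all
      then show ?thesis by simp
    qed
  next
    fix D g1 l g2
    assume H: "is_left_gcd 2 A B D \<and> is_gcd {\<epsilon>\<^sub>1, \<delta>\<^sub>1} g1 \<and> is_lcm \<epsilon>\<^sub>1 \<delta>\<^sub>1 l \<and>
        is_gcd {\<epsilon>\<^sub>2, \<delta>\<^sub>2, l * S $$ (1,0)} g2"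
    have Dc: "D \<in> carrier_mat 2 2" using H by (simp add: is_left_gcd_def)
    note AB = Div_AB[OF A B PA QA PB QB eqA eqB S]
    note GD = Div_gcd[OF edd A B conjunct1[OF H]]
    obtain al1 be1 where g1b: "g1 = al1*\<epsilon>\<^sub>1 + be1*\<delta>\<^sub>1" using bez2[OF edd] H by blast
    obtain p q r where g2b: "g2 = p*\<epsilon>\<^sub>2 + q*\<delta>\<^sub>2 + r*(l * S $$ (1,0))" using bez3[OF edd] H by blast
    have g1d: "g1 dvd \<epsilon>\<^sub>1" "g1 dvd \<delta>\<^sub>1" using H by (auto simp: is_gcd_def)
    have g2d: "g2 dvd \<epsilon>\<^sub>2" "g2 dvd \<delta>\<^sub>2" "g2 dvd l * S $$ (1,0)" using H by (auto simp: is_gcd_def)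
    have l': "\<epsilon>\<^sub>1 dvd l" "\<delta>\<^sub>1 dvd l" "\<And>m. \<epsilon>\<^sub>1 dvd m \<Longrightarrow> \<delta>\<^sub>1 dvd m \<Longrightarrow> l dvd m"
      using H by (auto simp: is_lcm_def)
    have gg: "\<And>d. d dvd \<epsilon>\<^sub>1 \<Longrightarrow> d dvd \<delta>\<^sub>1 \<Longrightarrow> d dvd g1"
      using H unfolding is_gcd_def by simp
    have D1: "Div1 (colsN D) = {c. c dvd g1}"
    proof -
      have "c \<in> Div1 (colsN D) \<longleftrightarrow> c dvd g1" for c
      proof -
        have "c \<in> Div1 (colsN D) \<longleftrightarrow> c dvd \<epsilon>\<^sub>1 \<and> c dvd \<delta>\<^sub>1"
          unfolding GD(1) AB(1) by (rule Div1_expl[OF e12 d12 AB(3)])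
        also have "\<dots> \<longleftrightarrow> c dvd g1" using gg dvd_trans[of c g1] g1d by blast
        finally show ?thesis .
      qed
      then show ?thesis by blast
    qed
    have D2: "Div2 (colsN D) = {c. c dvd g1*g2}"
    proof -
      have "c \<in> Div2 (colsN D) \<longleftrightarrow> c dvd g1*g2" for c
        unfolding GD(2) AB(2) Div2_expl by (rule arith_main[OF e12 d12 AB(3) g1d g1b l' g2d g2b])
      then show ?thesis by blast
    qed
    obtain p1 p2 P Q where dq: "P \<in> carrier_mat 2 2" "invertible_mat P" "Q \<in> carrier_mat 2 2" "invertible_mat Q"
      "P * D * Q = diag2 p1 p2" "p1 dvd p2" "Div1 (colsN D) = {c. c dvd p1}" "Div2 (colsN D) = {c. c dvd p1*p2}"
      using d_form[OF edd Dc] by metis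
    have s1: "{c. c dvd g1} = {c. c dvd p1}" using D1 dq(7) by simp
    have s2: "{c. c dvd g1*g2} = {c. c dvd p1*p2}" using D2 dq(8) by simp
    have "p1 \<in> {c. c dvd g1}" unfolding s1 by simp
    moreover have "g1 \<in> {c. c dvd p1}" unfolding s1[symmetric] by simp
    ultimately have a1: "p1 dvd g1" "g1 dvd p1" by simp_all
    have "p1*p2 \<in> {c. c dvd g1*g2}" unfolding s2 by simp
    moreover have "g1*g2 \<in> {c. c dvd p1*p2}" unfolding s2[symmetric] by simp
    ultimately have a2: "p1*p2 dvd g1*g2" "g1*g2 dvd p1*p2" by simp_all
    obtain u1 where u1: "u1 dvd 1" "g1 = u1*p1" using assoc_unit[OF a1] by blast
    have g12: "g1 dvd g2"
    proof -
      have "g1 dvd \<epsilon>\<^sub>2" "g1 dvd \<delta>\<^sub>2" using dvd_trans[OF g1d(1) e12] dvd_trans[OF g1d(2) d12] by simp_all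
      moreover have "g1 dvd l * S $$ (1,0)" using dvd_mult2[OF dvd_trans[OF g1d(1) l'(1)]] by simp
      moreover have "\<forall>d. (\<forall>s\<in>{\<epsilon>\<^sub>2, \<delta>\<^sub>2, l * S $$ (1,0)}. d dvd s) \<longrightarrow> d dvd g2"
        using H unfolding is_gcd_def by simp
      ultimately show ?thesis by simp
    qed
    have "\<exists>u2. u2 dvd 1 \<and> g2 = u2*p2"
    proof (cases "p1 = 0")
      case True
      then have "g1 = 0" "p2 = 0" using u1 dq(6) by auto
      then have "g2 = 0" using g12 by simp
      then show ?thesis using \<open>p2 = 0\<close> by (intro exI[of _ 1]) simp
    next
      case False
      obtain v1 where v1: "1 = u1*v1" using u1(1) by (auto elim: dvdE)
      have "p1*(u1*g2) dvd p1*p2" using a2(2) u1(2) by (simp add: mult.assoc mult.left_commute)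
      then have "u1*g2 dvd p2" using False by simp
      then have b1: "g2 dvd p2" using dvd_trans[OF dvd_triv_right] by blast
      have "p1*p2 dvd p1*(u1*g2)" using a2(1) u1(2) by (simp add: mult.assoc mult.left_commute)
      then have "p2 dvd u1*g2" using False by simp
      then have "p2 dvd v1*(u1*g2)" by (simp add: dvd_mult)
      moreover have "v1*(u1*g2) = (u1*v1)*g2" by (simp add: algebra_simps)
      ultimately have b2: "p2 dvd g2" using v1 by simp
      show ?thesis using assoc_unit[OF b2 b1] .
    qed
    then obtain u2 where u2: "u2 dvd 1" "g2 = u2*p2" by blast
    have dm: "is_d_matrix (diag2 g1 g2)"
      unfolding is_d_matrix_def using g12 by (auto simp: diag2_def mat_diag_def)
    obtain v1 where v1: "1 = u1*v1" using u1(1) by (auto elim: dvdE)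
    obtain v2 where v2: "1 = u2*v2" using u2(1) by (auto elim: dvdE)
    define U where "U = diag2 u1 u2"
    define V where "V = diag2 v1 v2"
    have Uc: "U \<in> carrier_mat 2 2" "V \<in> carrier_mat 2 2" by (simp_all add: U_def V_def diag2_idx)
    have "(\<lambda>i. (if i = 0 then u1 else u2) * (if i = 0 then v1 else v2)) = (\<lambda>i::nat. 1)"
      using v1 v2 by auto
    then have UV: "U * V = 1\<^sub>m 2" by (simp add: U_def V_def diag2_def)
    have "(\<lambda>i. (if i = 0 then v1 else v2) * (if i = 0 then u1 else u2)) = (\<lambda>i::nat. 1)"
      using v1 v2 by (auto simp: mult.commute)
    then have VU: "V * U = 1\<^sub>m 2" by (simp add: U_def V_def diag2_def)
    have Ui: "invertible_mat U" unfolding invertible_mat_def inverts_mat_def using Uc UV VU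
      by (auto simp: square_mat.simps)
    have "(\<lambda>i. (if i = 0 then u1 else u2) * (if i = 0 then p1 else p2)) =
          (\<lambda>i::nat. if i = 0 then g1 else g2)" using u1 u2 by auto
    then have Ud: "U * diag2 p1 p2 = diag2 g1 g2" by (simp add: U_def diag2_def)
    have UPc: "U * P \<in> carrier_mat 2 2" using Uc dq by auto
    have UPi: "invertible_mat (U * P)" by (rule invertible_mult[OF Ui Uc(1) dq(2,1)])
    have PDc: "P * D \<in> carrier_mat 2 2" using dq(1) Dc by (rule mult_carrier_mat)
    have a1: "U * P * D = U * (P * D)" by (rule assoc_mult_mat[OF Uc(1) dq(1) Dc])
    have a2: "U * (P * D) * Q = U * (P * D * Q)" by (rule assoc_mult_mat[OF Uc(1) PDc dq(3)])
    have "U * P * D * Q = U * (P * D * Q)" using a1 a2 by simp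
    then have "U * P * D * Q = diag2 g1 g2" using dq(5) Ud by simp
    then have "mat_equiv D (diag2 g1 g2)" unfolding mat_equiv_def
      by (intro exI[of _ "U*P"] exI[of _ Q] conjI) (use UPc UPi dq(3,4) Dc in simp_all)
    then show "is_d_matrix (diag2 g1 g2) \<and> mat_equiv D (diag2 g1 g2)" using dm by simp
  qed
qed


end
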